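(* Let $\psi:[0,1]\to[0,1]$ be an increasing, differentiable, convex function. If $\psi(e^{-r/e})+\psi(re^{-r/e})\ge1$ for all $r\in[0,1]$, then $\psi(e^{-r/e})+\psi(re^{-r/e})\ge1$ for all $r\in[0,e]$. *)

theory Defs
  imports "HOL-Analysis.Analysis"
begin

end

theory Submission
  imports Defs
begin

lemma e_gt: "exp 1 > (2.48::real)"
proof -
  have "exp 1 > (1 + 1/5) powr (5::real)" by (rule exp_1_gt_powr) simp
  moreover have "(1 + 1/5) powr (5::real) = (6/5)^5"
    by (subst powr_realpow[symmetric]) (simp_all add: powr_numeral)
  moreover have "(6/5::real)^5 = 7776/3125" by (simp add: power_divide)
  ultimately show ?thesis by simp
qed

lemma ln_lb:
  fixes r :: real
  assumes "1 \<le> r"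
  shows "2*(r-1)/(r+1) \<le> ln r"
proof -
  let ?h = "\<lambda>x::real. ln x - 2*(x-1)/(x+1)"
  have "?h 1 \<le> ?h r"
  proof (rule DERIV_nonneg_imp_nondecreasing[OF assms])
    fix x :: real assume x: "1 \<le> x" "x \<le> r"
    have d: "(?h has_real_derivative (1/x - (2*(x+1) - 2*(x-1))/(x+1)^2)) (at x)"
      using x by (auto intro!: derivative_eq_intros simp: power2_eq_square)
    have q: "4*x \<le> (x+1)^2" using zero_le_power2[of "x-1"]
      by (simp add: power2_eq_square algebra_simps)
    have "4/(x+1)^2 \<le> 1/x" using q x by (simp add: divide_simps)
    moreover have "(2*(x+1) - 2*(x-1)) = (4::real)" by simp
    ultimately have "1/x - (2*(x+1) - 2*(x-1))/(x+1)^2 \<ge> 0" by simp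
    then show "\<exists>y. (?h has_real_derivative y) (at x) \<and> 0 \<le> y" using d by blast
  qed
  then show ?thesis by simp
qed

lemma key_ineq:
  fixes r :: real
  assumes "1 \<le> r" "r \<le> exp 1"
  shows "r * (r - exp 1 * ln r) \<le> 1"
proof -
  have l: "2*(r-1)/(r+1) \<le> ln r" by (rule ln_lb[OF assms(1)])
  have e0: "exp 1 > (0::real)" by simp
  have "exp 1 * r * (2*(r-1)/(r+1)) \<le> exp 1 * r * ln r"
    using l assms by (intro mult_left_mono) auto
  moreover have "r*r - 1 \<le> exp 1 * r * (2*(r-1)/(r+1))"
  proof -
    have e2: "exp 1 > (2.48::real)" by (rule e_gt)
    have p: "(r-1)*(exp 1 - r) \<ge> 0" using assms by simp
    hence p2: "r*r \<le> (1 + exp 1)*r - exp 1" by (simp add: algebra_simps)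
    have e3: "exp 1 \<le> (3::real)" by (rule exp_le)
    have m: "(3 - exp 1)*r \<le> (3 - exp 1)*exp 1" using assms e3 by (intro mult_left_mono) auto
    have m2: "(2.48::real) * 0.48 \<le> exp 1 * (exp 1 - 2)" using e2 by (intro mult_mono) auto
    have "(r+1)^2 \<le> 2 * exp 1 * r"
      using p2 m m2 by (simp add: power2_eq_square algebra_simps)
    hence "(r-1)*(2*exp 1*r - (r+1)^2) \<ge> 0" using assms by simp
    hence "(r*r - 1)*(r+1) \<le> exp 1 * r * (2*(r-1))"
      by (simp add: power2_eq_square algebra_simps)
    thus ?thesis using assms by (simp add: field_simps)
  qed
  ultimately show ?thesis by (simp add: algebra_simps)
qed

theorem lemma5p4:
  fixes \<psi> :: "real \<Rightarrow> real"
  assumes range: "\<forall>x\<in>{0..1}. \<psi> x \<in> {0..1}"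
    and incr: "mono_on {0..1} \<psi>"
    and diff: "\<psi> differentiable_on {0..1}"
    and cvx: "convex_on {0..1} \<psi>"
    and hyp: "\<forall>r\<in>{0..1}. \<psi> (exp (- r / exp 1)) + \<psi> (r * exp (- r / exp 1)) \<ge> 1"
  shows "\<forall>r\<in>{0..exp 1}. \<psi> (exp (- r / exp 1)) + \<psi> (r * exp (- r / exp 1)) \<ge> 1"
proof
  fix r :: real assume r: "r \<in> {0..exp 1}"
  show "\<psi> (exp (- r / exp 1)) + \<psi> (r * exp (- r / exp 1)) \<ge> 1"
  proof (cases "r \<le> 1")
    case True then show ?thesis using hyp r by auto
  next
    case False
    hence r1: "1 \<le> r" "r \<le> exp 1" using r by auto
    define s where "s = r - exp 1 * ln r"
    have e0: "exp 1 > (0::real)" by simp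
    have "ln (r / exp 1) \<le> r / exp 1 - 1" using r1 by (intro ln_le_minus_one) auto
    moreover have "ln (r / exp 1) = ln r - 1" using r1 by (simp add: ln_div)
    ultimately have "ln r \<le> r / exp 1" by simp
    hence "exp 1 * ln r \<le> r" using e0 by (simp add: field_simps)
    hence s0: "0 \<le> s" unfolding s_def by simp
    have "ln ((r-1)+1) \<ge> (r-1)/(1+(r-1))" using r1 by (intro ln_add1_ge) simp
    hence lr: "ln r \<ge> (r-1)/r" by simp
    have "(r-1)*(exp 1 - r) \<ge> 0" using r1 by simp
    hence "r - 1 \<le> exp 1 * ((r-1)/r)" using r1 by (simp add: field_simps algebra_simps)
    also have "\<dots> \<le> exp 1 * ln r" using lr e0 by (intro mult_left_mono) auto
    finally have s1: "s \<le> 1" unfolding s_def by simp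
    have "- s / exp 1 = ln r + (- r / exp 1)" unfolding s_def using e0 by (simp add: field_simps)
    moreover have "exp (ln r + (- r / exp 1)) = exp (ln r) * exp (- r / exp 1)" by (rule exp_add)
    moreover have "exp (ln r) = r" using r1 by simp
    ultimately have A: "exp (- s / exp 1) = r * exp (- r / exp 1)" by metis
    have "s * r \<le> 1" using key_ineq[OF r1] unfolding s_def by (simp add: mult.commute)
    hence B: "s * (r * exp (- r / exp 1)) \<le> exp (- r / exp 1)"
      using mult_right_mono[of "s*r" 1 "exp (- r / exp 1)"] by (simp add: mult.assoc)
    have "exp (- s / exp 1) \<le> 1" using s0 e0 by simp
    hence b01: "r * exp (- r / exp 1) \<in> {0..1}" using A r1 by (simp only: atLeastAtMost_iff) simp
    have a01: "exp (- r / exp 1) \<in> {0..1}" using r1 e0 by simp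
    have c01: "s * (r * exp (- r / exp 1)) \<in> {0..1}"
    proof -
      have "exp (- r / exp 1) \<le> 1" using a01 by simp
      moreover have "0 \<le> s * (r * exp (- r / exp 1))" using s0 r1 by simp
      ultimately show ?thesis using B unfolding atLeastAtMost_iff by linarith
    qed
    have H: "\<psi> (r * exp (- r / exp 1)) + \<psi> (s * (r * exp (- r / exp 1))) \<ge> 1"
      using hyp s0 s1 A by force
    have "\<psi> (s * (r * exp (- r / exp 1))) \<le> \<psi> (exp (- r / exp 1))"
      using incr c01 a01 B by (auto elim: mono_onD)
    with H show ?thesis by linarith
  qed
qed

end
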